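(* Let $\mathcal G=\mathfrak g_1\oplus\mathfrak g_2$ and $f,g\in C^*_{\mathsf{LTS}}(\mathcal G,\mathcal G)$ homogeneous. If $\|f\|=-1|l$ and $\|g\|=-1|k$, or if $\|f\|=l|-1$ and $\|g\|=k|-1$, then $[f,g]_{\mathsf{LTS}}=0$.
   Context: All vector spaces are over a field of characteristic $0$. Cochains: $C^p(\mathcal G,\mathcal G)=\mathrm{Hom}(\otimes^{2p+1}\mathcal G,\mathcal G)$, arguments $(\mathfrak X_1,\dots,\mathfrak X_p,x)$, $\mathfrak X_i=x_i\otimes y_i$; for $P\in C^p,Q\in C^q$, $(P\circ Q)(\mathfrak X_1,\dots,\mathfrak X_{p+q},x)=\sum_{k=1}^p(-1)^{(k-1)q}\sum_{\sigma\in\mathbb S(k-1,q)}(-1)^\sigma P(\mathfrak X_{\sigma(1)},\dots,\mathfrak X_{\sigma(k-1)},Q(\mathfrak X_{\sigma(k)},\dots,\mathfrak X_{\sigma(k+q-1)},x_{k+q})\otimes y_{k+q},\mathfrak X_{k+q+1},\dots,x)+\sum_{k=1}^p(-1)^{(k-1)q}\sum_{\sigma\in\mathbb S(k-1,q)}(-1)^\sigma P(\mathfrak X_{\sigma(1)},\dots,\mathfrak X_{\sigma(k-1)},x_{k+q}\otimes Q(\mathfrak X_{\sigma(k)},\dots,\mathfrak X_{\sigma(k+q-1)},y_{k+q}),\mathfrak X_{k+q+1},\dots,x)+\sum_{\sigma\in\mathbb S(p,q)}(-1)^\sigma P(\mathfrak X_{\sigma(1)},\dots,\mathfrak X_{\sigma(p)},Q(\mathfrak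 X_{\sigma(p+1)},\dots,\mathfrak X_{\sigma(p+q)},x))$ ($\mathbb S$ = shuffles), $[P,Q]=P\circ Q-(-1)^{pq}Q\circ P$; $C^p_{\mathsf{LTS}}$ is the subspace of $P$ with $P(\dots,x,x,y)=0$ and vanishing cyclic sum in the last three slots, with restricted bracket $[\cdot,\cdot]_{\mathsf{LTS}}$. Bidegree: $\mathfrak g^{a,b}\subset\otimes^{a+b}\mathcal G$ is the sum of all tensor products with exactly $a$ factors $\mathfrak g_1$ and $b$ factors $\mathfrak g_2$; $f\in C^p_{\mathsf{LTS}}$ has bidegree $l|k$ ($l+k=2p$) if $f(\mathfrak g^{l+1,k})\subset\mathfrak g_1$, $f(\mathfrak g^{l,k+1})\subset\mathfrak g_2$, and $f$ vanishes on all other $\mathfrak g^{a,b}$. *)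

theory Defs
  imports Complex_Main "HOL-Combinatorics.Permutations"
begin

type_synonym 'v cochain = "('v \<times> 'v) list \<Rightarrow> 'v \<Rightarrow> 'v"
  (* P Xs x  represents  P(X_1,...,X_p,x)  with  Xs = [(x_1,y_1),...,(x_p,y_p)],
     i.e. the value on the pure tensor x_1 (x) y_1 (x) ... (x) x_p (x) y_p (x) x *)

text \<open>Multilinear maps from the (2p+1)-fold tensor power of G to G, i.e. C^p(G,G).\<close>
definition is_cochain :: "('k::field \<Rightarrow> 'v::ab_group_add \<Rightarrow> 'v) \<Rightarrow> nat \<Rightarrow> 'v cochain \<Rightarrow> bool" where
  "is_cochain sc p P \<longleftrightarrow>
     (\<forall>Xs. length Xs = p \<longrightarrow> Vector_Spaces.linear sc sc (P Xs)) \<and>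
     (\<forall>Xs x i. length Xs = p \<longrightarrow> i < p \<longrightarrow>
        Vector_Spaces.linear sc sc (\<lambda>u. P (Xs[i := (u, snd (Xs ! i))]) x) \<and>
        Vector_Spaces.linear sc sc (\<lambda>u. P (Xs[i := (fst (Xs ! i), u)]) x))"

definition is_lts_cochain :: "('k::field \<Rightarrow> 'v::ab_group_add \<Rightarrow> 'v) \<Rightarrow> nat \<Rightarrow> 'v cochain \<Rightarrow> bool" where
  "is_lts_cochain sc p P \<longleftrightarrow> is_cochain sc p P \<and>
     (\<forall>Xs a b c. length Xs + 1 = p \<longrightarrow>
        P (Xs @ [(a, a)]) b = 0 \<and>
        P (Xs @ [(a, b)]) c + P (Xs @ [(b, c)]) a + P (Xs @ [(c, a)]) b = 0)"

text \<open>(i,j)-shuffles as permutations of {0..<i+j} (0-based).\<close>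
definition shuffles :: "nat \<Rightarrow> nat \<Rightarrow> (nat \<Rightarrow> nat) set" where
  "shuffles i j = {\<sigma>. \<sigma> permutes {..<i+j} \<and> strict_mono_on {..<i} \<sigma> \<and> strict_mono_on {i..<i+j} \<sigma>}"

text \<open>P o Q for P in C^p, Q in C^q (index k below is the paper's k-1).\<close>
definition lts_comp :: "('k::field \<Rightarrow> 'v::ab_group_add \<Rightarrow> 'v) \<Rightarrow> nat \<Rightarrow> nat \<Rightarrow> 'v cochain \<Rightarrow> 'v cochain \<Rightarrow> 'v cochain" where
  "lts_comp sc p q P Q Xs x =
     (\<Sum>k<p. \<Sum>\<sigma>\<in>shuffles k q. sc ((-1) ^ (k * q) * of_int (sign \<sigma>))
        (P (map (\<lambda>j. Xs ! \<sigma> j) [0..<k]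
            @ [(Q (map (\<lambda>j. Xs ! \<sigma> j) [k..<k+q]) (fst (Xs ! (k+q))), snd (Xs ! (k+q)))]
            @ drop (k+q+1) Xs) x))
   + (\<Sum>k<p. \<Sum>\<sigma>\<in>shuffles k q. sc ((-1) ^ (k * q) * of_int (sign \<sigma>))
        (P (map (\<lambda>j. Xs ! \<sigma> j) [0..<k]
            @ [(fst (Xs ! (k+q)), Q (map (\<lambda>j. Xs ! \<sigma> j) [k..<k+q]) (snd (Xs ! (k+q))))]
            @ drop (k+q+1) Xs) x))
   + (\<Sum>\<sigma>\<in>shuffles p q. sc (of_int (sign \<sigma>))
        (P (map (\<lambda>j. Xs ! \<sigma> j) [0..<p]) (Q (map (\<lambda>j. Xs ! \<sigma> j) [p..<p+q]) x)))"

definition lts_bracket :: "('k::field \<Rightarrow> 'v::ab_group_add \<Rightarrow> 'v) \<Rightarrow> nat \<Rightarrow> nat \<Rightarrow> 'v cochain \<Rightarrow> 'v cochain \<Rightarrow> 'v cochain" where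
  "lts_bracket sc p q P Q Xs x = lts_comp sc p q P Q Xs x - sc ((-1) ^ (p * q)) (lts_comp sc q p Q P Xs x)"

definition direct_sum :: "('k::field \<Rightarrow> 'v::ab_group_add \<Rightarrow> 'v) \<Rightarrow> 'v set \<Rightarrow> 'v set \<Rightarrow> bool" where
  "direct_sum sc g1 g2 \<longleftrightarrow> module.subspace sc g1 \<and> module.subspace sc g2 \<and>
     g1 \<inter> g2 = {0} \<and> (\<forall>v. \<exists>a\<in>g1. \<exists>b\<in>g2. v = a + b)"

text \<open>Bidegree l|k of P in C^p: tested on pure tensors of homogeneous elements (slots
  x_1,y_1,...,x_p,y_p,x numbered 0..2p; S = slots taken from g1).\<close>
definition has_bidegree :: "'v::ab_group_add set \<Rightarrow> 'v set \<Rightarrow> nat \<Rightarrow> 'v cochain \<Rightarrow> int \<Rightarrow> int \<Rightarrow> bool" where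
  "has_bidegree g1 g2 p P l k \<longleftrightarrow> l + k = 2 * int p \<and>
     (\<forall>Xs x S. length Xs = p \<longrightarrow> S \<subseteq> {..<2*p+1} \<longrightarrow>
        (\<forall>i<p. fst (Xs ! i) \<in> (if 2*i \<in> S then g1 else g2) \<and>
               snd (Xs ! i) \<in> (if 2*i+1 \<in> S then g1 else g2)) \<longrightarrow>
        x \<in> (if 2*p \<in> S then g1 else g2) \<longrightarrow>
        (if int (card S) = l + 1 then P Xs x \<in> g1
         else if int (card S) = l then P Xs x \<in> g2
         else P Xs x = 0))"

end

theory Submission
  imports Defs
begin

lemma lin_add: "Vector_Spaces.linear sc sc h \<Longrightarrow> h (a + b) = h a + h b"
  by (metis module_hom.add module_hom_iff_linear)

lemma homog_induct:
  fixes F :: "(nat \<Rightarrow> 'v::ab_group_add) \<Rightarrow> 'w::ab_group_add"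
  assumes decomp: "\<forall>v. \<exists>a\<in>A. \<exists>b\<in>B. v = a + b"
    and add: "\<And>s j a b. j < n \<Longrightarrow> F (s(j:=a+b)) = F (s(j:=a)) + F (s(j:=b))"
    and base: "\<And>s. (\<forall>j<n. s j \<in> A \<union> B) \<Longrightarrow> Pr s \<Longrightarrow> C (F s)"
    and Cadd: "\<And>x y. C x \<Longrightarrow> C y \<Longrightarrow> C (x + y)"
    and Pr_upd: "\<And>s j a. Pr s \<Longrightarrow> j < n \<Longrightarrow> s j \<notin> A \<union> B \<Longrightarrow> Pr (s(j:=a))"
  shows "Pr s \<Longrightarrow> C (F s)"
proof (induction "card {j. j < n \<and> s j \<notin> A \<union> B}" arbitrary: s rule: less_induct)
  case less
  show ?case
  proof (cases "\<forall>j<n. s j \<in> A \<union> B")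
    case True
    then show ?thesis using base less.prems by blast
  next
    case False
    then obtain j0 where j0: "j0 < n" "s j0 \<notin> A \<union> B" by blast
    obtain a b where ab: "a \<in> A" "b \<in> B" "s j0 = a + b" using decomp by blast
    have sub: "card {j. j < n \<and> (s(j0:=c)) j \<notin> A \<union> B} < card {j. j < n \<and> s j \<notin> A \<union> B}"
      if "c \<in> A \<union> B" for c
    proof (rule psubset_card_mono)
      show "finite {j. j < n \<and> s j \<notin> A \<union> B}" by simp
      show "{j. j < n \<and> (s(j0:=c)) j \<notin> A \<union> B} \<subset> {j. j < n \<and> s j \<notin> A \<union> B}"
        using that j0 by auto
    qed
    have "C (F (s(j0:=a)))" using less.hyps[OF sub[of a] Pr_upd[OF less.prems j0]] ab by blast
    moreover have "C (F (s(j0:=b)))" using less.hyps[OF sub[of b] Pr_upd[OF less.prems j0]] ab by blast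
    ultimately have "C (F (s(j0:=a+b)))" using add[OF j0(1)] Cadd by simp
    then show ?thesis using ab by (metis fun_upd_triv)
  qed
qed

definition unslot :: "nat \<Rightarrow> (nat \<Rightarrow> 'v) \<Rightarrow> ('v \<times> 'v) list" where
  "unslot p s = map (\<lambda>i. (s (2*i), s (2*i+1))) [0..<p]"

definition slots :: "('v \<times> 'v) list \<Rightarrow> 'v \<Rightarrow> nat \<Rightarrow> 'v" where
  "slots Xs x j = (if j = 2 * length Xs then x else if even j then fst (Xs ! (j div 2)) else snd (Xs ! (j div 2)))"

lemma unslot_slots: "length Xs = p \<Longrightarrow> unslot p (slots Xs x) = Xs"
  unfolding unslot_def slots_def by (auto intro!: nth_equalityI)

lemma slots_last: "slots Xs x (2 * length Xs) = x"
  by (simp add: slots_def)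

lemma unslot_upd_last: "unslot p (s(2*p := u)) = unslot p s"
  unfolding unslot_def by auto

lemma unslot_upd_even: "i < p \<Longrightarrow> unslot p (s(2*i := u)) = (unslot p s)[i := (u, snd (unslot p s ! i))]"
  unfolding unslot_def by (auto intro!: nth_equalityI simp: nth_list_update)

lemma unslot_upd_odd: "i < p \<Longrightarrow> unslot p (s(Suc (2*i) := u)) = (unslot p s)[i := (fst (unslot p s ! i), u)]"
  unfolding unslot_def by (auto intro!: nth_equalityI simp: nth_list_update)

lemma F_add:
  assumes "is_cochain sc p f" "j < 2*p+1"
  shows "f (unslot p (s(j:=a+b))) ((s(j:=a+b)) (2*p)) =
         f (unslot p (s(j:=a))) ((s(j:=a)) (2*p)) + f (unslot p (s(j:=b))) ((s(j:=b)) (2*p))"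
proof -
  have len: "length (unslot p s) = p" by (simp add: unslot_def)
  consider "j = 2*p" | i where "i < p" "j = 2*i" | i where "i < p" "j = 2*i+1"
  proof -
    have "j = 2*(j div 2) \<or> j = 2*(j div 2)+1" by presburger
    moreover have "j \<noteq> 2*p \<Longrightarrow> j div 2 < p" using assms(2) by auto
    ultimately show ?thesis using that by metis
  qed
  then show ?thesis
  proof cases
    case 1
    have "Vector_Spaces.linear sc sc (f (unslot p s))" using assms(1) len unfolding is_cochain_def by blast
    then show ?thesis using 1 by (simp add: unslot_upd_last lin_add)
  next
    case (2 i)
    then have ne: "2*i \<noteq> 2*p" by simp
    have "Vector_Spaces.linear sc sc (\<lambda>u. f ((unslot p s)[i := (u, snd (unslot p s ! i))]) (s (2*p)))"
      using assms(1) len 2 unfolding is_cochain_def by blast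
    from lin_add[OF this, of a b] show ?thesis using 2 ne by (simp add: unslot_upd_even)
  next
    case (3 i)
    then have ne: "2*i+1 \<noteq> 2*p" by presburger
    have "Vector_Spaces.linear sc sc (\<lambda>u. f ((unslot p s)[i := (fst (unslot p s ! i), u)]) (s (2*p)))"
      using assms(1) len 3 unfolding is_cochain_def by blast
    from lin_add[OF this, of a b] show ?thesis using 3 ne by (simp add: unslot_upd_odd)
  qed
qed


lemma bideg_slots:
  assumes "has_bidegree g1 g2 p f l k" "S \<subseteq> {..<2*p+1}"
    "\<forall>j<2*p+1. s j \<in> (if j \<in> S then g1 else g2)"
  shows "if int (card S) = l + 1 then f (unslot p s) (s (2*p)) \<in> g1
         else if int (card S) = l then f (unslot p s) (s (2*p)) \<in> g2
         else f (unslot p s) (s (2*p)) = 0"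
proof -
  have len: "length (unslot p s) = p" by (simp add: unslot_def)
  have c: "\<forall>i<p. fst (unslot p s ! i) \<in> (if 2*i \<in> S then g1 else g2) \<and>
               snd (unslot p s ! i) \<in> (if 2*i+1 \<in> S then g1 else g2)"
    using assms(3) by (auto simp: unslot_def)
  have "s (2*p) \<in> (if 2*p \<in> S then g1 else g2)" using assms(3) by auto
  then show ?thesis using assms(1,2) len c unfolding has_bidegree_def by blast
qed

definition conc :: "('k::field \<Rightarrow> 'v::ab_group_add \<Rightarrow> 'v) \<Rightarrow> 'v set \<Rightarrow> 'v set \<Rightarrow> nat \<Rightarrow> 'v cochain \<Rightarrow> bool" where
  "conc sc A B p f \<longleftrightarrow> is_cochain sc p f \<and>
     (\<forall>s. (\<forall>j<2*p+1. s j \<in> A \<union> B) \<longrightarrow> f (unslot p s) (s (2*p)) \<in> B \<and>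
        ((\<exists>j<2*p+1. s j \<in> B) \<longrightarrow> f (unslot p s) (s (2*p)) = 0))"

lemma conc_vanish:
  assumes "conc sc A B p f" "\<forall>v. \<exists>a\<in>A. \<exists>b\<in>B. v = a + b" "j < 2*p+1" "s j \<in> B"
  shows "f (unslot p s) (s (2*p)) = 0"
proof -
  have cc: "is_cochain sc p f" using assms(1) conc_def by blast
  show ?thesis
  proof (rule homog_induct[where F = "\<lambda>s. f (unslot p s) (s (2*p))" and n = "2*p+1" and A = A and B = B
        and Pr = "\<lambda>s. \<exists>j<2*p+1. s j \<in> B" and C = "\<lambda>v. v = 0"])
    show "\<forall>v. \<exists>a\<in>A. \<exists>b\<in>B. v = a + b" by fact
    show "\<And>s j a b. j < 2*p+1 \<Longrightarrow> f (unslot p (s(j:=a+b))) ((s(j:=a+b)) (2*p)) =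
         f (unslot p (s(j:=a))) ((s(j:=a)) (2*p)) + f (unslot p (s(j:=b))) ((s(j:=b)) (2*p))"
      using F_add[OF cc] by blast
    show "\<And>s. \<forall>j<2*p+1. s j \<in> A \<union> B \<Longrightarrow> \<exists>j<2*p+1. s j \<in> B \<Longrightarrow> f (unslot p s) (s (2*p)) = 0"
      using assms(1) conc_def by blast
    show "\<And>s j a. \<exists>j<2*p+1. s j \<in> B \<Longrightarrow> j < 2*p+1 \<Longrightarrow> s j \<notin> A \<union> B \<Longrightarrow> \<exists>ja<2*p+1. (s(j := a)) ja \<in> B"
      by (metis UnCI fun_upd_other)
    show "\<exists>j<2*p+1. s j \<in> B" using assms(3,4) by blast
  qed simp
qed

lemma conc_inB:
  assumes "conc sc A B p f" "\<forall>v. \<exists>a\<in>A. \<exists>b\<in>B. v = a + b" "\<And>x y. x \<in> B \<Longrightarrow> y \<in> B \<Longrightarrow> x + y \<in> B"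
  shows "f (unslot p s) (s (2*p)) \<in> B"
proof -
  have cc: "is_cochain sc p f" using assms(1) conc_def by blast
  show ?thesis
  proof (rule homog_induct[where F = "\<lambda>s. f (unslot p s) (s (2*p))" and n = "2*p+1" and A = A and B = B
        and Pr = "\<lambda>s. True" and C = "\<lambda>v. v \<in> B"])
    show "\<forall>v. \<exists>a\<in>A. \<exists>b\<in>B. v = a + b" by fact
    show "\<And>s j a b. j < 2*p+1 \<Longrightarrow> f (unslot p (s(j:=a+b))) ((s(j:=a+b)) (2*p)) =
         f (unslot p (s(j:=a))) ((s(j:=a)) (2*p)) + f (unslot p (s(j:=b))) ((s(j:=b)) (2*p))"
      using F_add[OF cc] by blast
    show "\<And>s. \<forall>j<2*p+1. s j \<in> A \<union> B \<Longrightarrow> True \<Longrightarrow> f (unslot p s) (s (2*p)) \<in> B"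
      using assms(1) conc_def by blast
  qed (use assms(3) in auto)
qed

lemma conc_vanish_list:
  assumes "conc sc A B p f" "\<forall>v. \<exists>a\<in>A. \<exists>b\<in>B. v = a + b" "length Ys = p"
    "(\<exists>i<p. fst (Ys ! i) \<in> B \<or> snd (Ys ! i) \<in> B) \<or> y \<in> B"
  shows "f Ys y = 0"
proof -
  have e: "f Ys y = f (unslot p (slots Ys y)) (slots Ys y (2*p))"
    using assms(3) unslot_slots slots_last by metis
  have "\<exists>j<2*p+1. slots Ys y j \<in> B"
  proof -
    from assms(4) show ?thesis
    proof
      assume "\<exists>i<p. fst (Ys ! i) \<in> B \<or> snd (Ys ! i) \<in> B"
      then obtain i where i: "i < p" "fst (Ys ! i) \<in> B \<or> snd (Ys ! i) \<in> B" by blast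
      from i(2) show ?thesis
      proof
        assume "fst (Ys ! i) \<in> B"
        then have "slots Ys y (2*i) \<in> B" using i assms(3) by (simp add: slots_def)
        then show ?thesis using i by (intro exI[of _ "2*i"]) simp
      next
        assume "snd (Ys ! i) \<in> B"
        then have "slots Ys y (2*i+1) \<in> B" using i assms(3) by (simp add: slots_def)
        then show ?thesis using i by (intro exI[of _ "2*i+1"]) simp
      qed
    next
      assume "y \<in> B"
      then have "slots Ys y (2*p) \<in> B" using assms(3) slots_last by metis
      then show ?thesis by (intro exI[of _ "2*p"]) simp
    qed
  qed
  then show ?thesis using e conc_vanish[OF assms(1,2)] by metis
qed

lemma conc_inB_list:
  assumes "conc sc A B p f" "\<forall>v. \<exists>a\<in>A. \<exists>b\<in>B. v = a + b" "\<And>x y. x \<in> B \<Longrightarrow> y \<in> B \<Longrightarrow> x + y \<in> B"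
    "length Ys = p"
  shows "f Ys y \<in> B"
proof -
  have e: "f Ys y = f (unslot p (slots Ys y)) (slots Ys y (2*p))"
    using assms(4) unslot_slots slots_last by metis
  then show ?thesis using conc_inB[OF assms(1-3)] by metis
qed


lemma sc_zero: "vector_space sc \<Longrightarrow> sc c 0 = 0"
  by (metis module.scale_zero_right module_iff_vector_space)

lemma comp_zero:
  assumes vs: "vector_space sc" and cf: "conc sc A B p f" and cg: "conc sc A B q g"
    and dec: "\<forall>v. \<exists>a\<in>A. \<exists>b\<in>B. v = a + b"
    and Badd: "\<And>x y. x \<in> B \<Longrightarrow> y \<in> B \<Longrightarrow> x + y \<in> B"
    and len: "length Xs = p + q"
  shows "lts_comp sc p q f g Xs x = 0"
proof -
  have gB: "g (map (\<lambda>j. Xs ! \<sigma> j) [k..<k+q]) y \<in> B" for \<sigma> k y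
    using conc_inB_list[OF cg dec Badd, of "map (\<lambda>j. Xs ! \<sigma> j) [k..<k+q]" y] by simp
  have t1: "f (map (\<lambda>j. Xs ! \<sigma> j) [0..<k]
            @ [(g (map (\<lambda>j. Xs ! \<sigma> j) [k..<k+q]) (fst (Xs ! (k+q))), snd (Xs ! (k+q)))]
            @ drop (k+q+1) Xs) x = 0" if "k < p" for \<sigma> k
    by (rule conc_vanish_list[OF cf dec]) (use that len gB in \<open>auto simp: nth_append intro!: exI[of _ k]\<close>)
  have t2: "f (map (\<lambda>j. Xs ! \<sigma> j) [0..<k]
            @ [(fst (Xs ! (k+q)), g (map (\<lambda>j. Xs ! \<sigma> j) [k..<k+q]) (snd (Xs ! (k+q))))]
            @ drop (k+q+1) Xs) x = 0" if "k < p" for \<sigma> k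
    by (rule conc_vanish_list[OF cf dec]) (use that len gB in \<open>auto simp: nth_append intro!: exI[of _ k]\<close>)
  have t3: "f (map (\<lambda>j. Xs ! \<sigma> j) [0..<p]) (g (map (\<lambda>j. Xs ! \<sigma> j) [p..<p+q]) x) = 0" for \<sigma>
    by (rule conc_vanish_list[OF cf dec]) (use gB in auto)
  show ?thesis unfolding lts_comp_def using t1 t2 t3 by (simp add: sc_zero[OF vs])
qed


lemma conc_case1:
  assumes cc: "is_cochain sc p f" and hb: "has_bidegree g1 g2 p f (-1) l" and z: "0 \<in> g1"
  shows "conc sc g2 g1 p f"
  unfolding conc_def
proof (intro conjI cc allI impI)
  fix s assume hs: "\<forall>j<2*p+1. s j \<in> g2 \<union> g1"
  define S where "S = {j. j < 2*p+1 \<and> s j \<in> g1}"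
  have Ssub: "S \<subseteq> {..<2*p+1}" by (auto simp: S_def)
  have fS: "finite S" using Ssub finite_subset by blast
  have memb: "\<forall>j<2*p+1. s j \<in> (if j \<in> S then g1 else g2)" using hs by (auto simp: S_def)
  note b = bideg_slots[OF hb Ssub memb]
  have ne: "int (card S) \<noteq> -1" by simp
  show "f (unslot p s) (s (2*p)) \<in> g1"
    using b ne z by (auto split: if_splits)
  { assume "\<exists>j<2*p+1. s j \<in> g1"
    then obtain j where "j \<in> S" by (auto simp: S_def)
    then have "card S \<noteq> 0" using fS by auto
    then show "f (unslot p s) (s (2*p)) = 0" using b ne by (auto split: if_splits) }
qed

lemma conc_case2:
  assumes cc: "is_cochain sc p f" and hb: "has_bidegree g1 g2 p f l (-1)" and z: "0 \<in> g2"
  shows "conc sc g1 g2 p f"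
  unfolding conc_def
proof (intro conjI cc allI impI)
  have l: "l = 2 * int p + 1" using hb unfolding has_bidegree_def by simp
  fix s assume hs: "\<forall>j<2*p+1. s j \<in> g1 \<union> g2"
  define S where "S = {j. j < 2*p+1 \<and> s j \<notin> g2}"
  have Ssub: "S \<subseteq> {..<2*p+1}" by (auto simp: S_def)
  have fS: "finite S" using Ssub finite_subset by blast
  have cS: "card S \<le> 2*p+1" using card_mono[OF _ Ssub] by simp
  have memb: "\<forall>j<2*p+1. s j \<in> (if j \<in> S then g1 else g2)" using hs by (auto simp: S_def)
  note b = bideg_slots[OF hb Ssub memb]
  have ne: "int (card S) \<noteq> l + 1" using cS l by simp
  show "f (unslot p s) (s (2*p)) \<in> g2"
    using b ne z by (auto split: if_splits)
  { assume "\<exists>j<2*p+1. s j \<in> g2"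
    then obtain j where j: "j < 2*p+1" "s j \<in> g2" by blast
    then have "S \<subseteq> {..<2*p+1} - {j}" by (auto simp: S_def)
    then have "card S \<le> card ({..<2*p+1} - {j})" by (intro card_mono) auto
    also have "\<dots> = 2*p" using j by simp
    finally have "int (card S) \<noteq> l" using l by simp
    then show "f (unslot p s) (s (2*p)) = 0" using b ne by (auto split: if_splits) }
qed

theorem lemma3p3:
  fixes sc :: "'k::field_char_0 \<Rightarrow> 'v::ab_group_add \<Rightarrow> 'v"
    and g1 g2 :: "'v set" and f g :: "'v cochain" and p q :: nat and l k :: int
  assumes "vector_space sc"
    and "direct_sum sc g1 g2"
    and "is_lts_cochain sc p f"
    and "is_lts_cochain sc q g"
    and "(has_bidegree g1 g2 p f (-1) l \<and> has_bidegree g1 g2 q g (-1) k) \<or>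
         (has_bidegree g1 g2 p f l (-1) \<and> has_bidegree g1 g2 q g k (-1))"
  shows "\<forall>Xs x. length Xs = p + q \<longrightarrow> lts_bracket sc p q f g Xs x = 0"
proof (intro allI impI)
  fix Xs :: "('v \<times> 'v) list" and x :: 'v
  assume len: "length Xs = p + q"
  have len': "length Xs = q + p" using len by simp
  have cf: "is_cochain sc p f" and cg: "is_cochain sc q g"
    using assms(3,4) unfolding is_lts_cochain_def by auto
  have s1: "module.subspace sc g1" and s2: "module.subspace sc g2"
    and dec: "\<forall>v. \<exists>a\<in>g1. \<exists>b\<in>g2. v = a + b"
    using assms(2) unfolding direct_sum_def by auto
  have z1: "0 \<in> g1" and a1: "\<And>x y. x \<in> g1 \<Longrightarrow> y \<in> g1 \<Longrightarrow> x + y \<in> g1"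
    using s1 module.subspace_0 module.subspace_add assms(1) module_iff_vector_space by metis+
  have z2: "0 \<in> g2" and a2: "\<And>x y. x \<in> g2 \<Longrightarrow> y \<in> g2 \<Longrightarrow> x + y \<in> g2"
    using s2 module.subspace_0 module.subspace_add assms(1) module_iff_vector_space by metis+
  have dec': "\<forall>v. \<exists>a\<in>g2. \<exists>b\<in>g1. v = a + b" using dec by (metis add.commute)
  from assms(5) have "lts_comp sc p q f g Xs x = 0 \<and> lts_comp sc q p g f Xs x = 0"
  proof
    assume h: "has_bidegree g1 g2 p f (-1) l \<and> has_bidegree g1 g2 q g (-1) k"
    have F: "conc sc g2 g1 p f" using conc_case1[OF cf _ z1] h by blast
    have G: "conc sc g2 g1 q g" using conc_case1[OF cg _ z1] h by blast
    show ?thesis using comp_zero[OF assms(1) F G dec' a1 len] comp_zero[OF assms(1) G F dec' a1 len'] by simp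
  next
    assume h: "has_bidegree g1 g2 p f l (-1) \<and> has_bidegree g1 g2 q g k (-1)"
    have F: "conc sc g1 g2 p f" using conc_case2[OF cf _ z2] h by blast
    have G: "conc sc g1 g2 q g" using conc_case2[OF cg _ z2] h by blast
    show ?thesis using comp_zero[OF assms(1) F G dec a2 len] comp_zero[OF assms(1) G F dec a2 len'] by simp
  qed
  then show "lts_bracket sc p q f g Xs x = 0"
    unfolding lts_bracket_def by (simp add: sc_zero[OF assms(1)])
qed

end
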